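(* Let $R$ be a finitely generated unital $K$-algebra with filtration $\mathcal{F}=\{V_i\}_{i\ge1}$, let $e\in R$ be a full idempotent and $S:=eRe$. Then, with respect to the filtration $\mathcal{G}=\{eV_ie\}_{i\ge1}$ of $S$, one has $\mathrm{h}_{\mathrm{alg}}(S,\mathcal{G})\le\mathrm{h}_{\mathrm{alg}}(R,\mathcal{F})$.
   Context: An idempotent $e$ of $R$ is full if $ReR=R$. A filtration of $R$ is an increasing family of subspaces $V_i$ with union $R$ and $V_iV_j\subseteq V_{i+j}$, with finite-dimensional quotients $V_i/V_{i-1}$. $\mathrm{h}_{\mathrm{alg}}(R,\mathcal{F})=0$ if $R$ is finite-dimensional and otherwise $\limsup_n\frac1n\log\dim(V_n/V_{n-1})$. *)

theory Defs
  imports Complex_Main "HOL-Library.Liminf_Limsup" "HOL-Library.Extended_Real"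
begin

definition is_algebra :: "('k::field \<Rightarrow> 'a::ring_1 \<Rightarrow> 'a) \<Rightarrow> bool" where
  "is_algebra scale \<longleftrightarrow> Vector_Spaces.vector_space scale \<and>
     (\<forall>c x y. scale c (x * y) = scale c x * y \<and> scale c (x * y) = x * scale c y)"

definition fin_gen_algebra :: "('k::field \<Rightarrow> 'a::ring_1 \<Rightarrow> 'a) \<Rightarrow> bool" where
  "fin_gen_algebra scale \<longleftrightarrow> (\<exists>G. finite G \<and>
     (\<lambda>T. module.subspace scale T \<and> 1 \<in> T \<and> (\<forall>x\<in>T. \<forall>y\<in>T. x * y \<in> T)) hull G = UNIV)"

definition full_idempotent :: "('k::field \<Rightarrow> 'a::ring_1 \<Rightarrow> 'a) \<Rightarrow> 'a \<Rightarrow> bool" where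
  "full_idempotent scale e \<longleftrightarrow> e * e = e \<and>
     module.span scale {x * e * y | x y. True} = UNIV"

text \<open>Filtration indexed by i \<ge> 1; V_0 is taken to be {0}.\<close>
definition filt0 :: "(nat \<Rightarrow> 'a::zero set) \<Rightarrow> nat \<Rightarrow> 'a set" where
  "filt0 V i = (if i = 0 then {0} else V i)"

definition finite_dim :: "('k::field \<Rightarrow> 'a::ring_1 \<Rightarrow> 'a) \<Rightarrow> 'a set \<Rightarrow> bool" where
  "finite_dim scale A \<longleftrightarrow> (\<exists>B. finite B \<and> A \<subseteq> module.span scale B)"

definition is_filtration ::
  "('k::field \<Rightarrow> 'a::ring_1 \<Rightarrow> 'a) \<Rightarrow> 'a set \<Rightarrow> (nat \<Rightarrow> 'a set) \<Rightarrow> bool" where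
  "is_filtration scale A V \<longleftrightarrow>
     (\<forall>i\<ge>1. module.subspace scale (V i) \<and> V i \<subseteq> A) \<and>
     (\<forall>i\<ge>1. V i \<subseteq> V (Suc i)) \<and>
     (\<Union>i\<in>{1..}. V i) = A \<and>
     (\<forall>i\<ge>1. \<forall>j\<ge>1. \<forall>x\<in>V i. \<forall>y\<in>V j. x * y \<in> V (i + j)) \<and>
     (\<forall>i\<ge>1. \<exists>B. finite B \<and> V i \<subseteq> module.span scale (filt0 V (i - 1) \<union> B))"

text \<open>dim (V_n / V_{n-1}) = dim V_n - dim V_{n-1} (all V_i finite-dimensional).\<close>
definition qdim :: "('k::field \<Rightarrow> 'a::ring_1 \<Rightarrow> 'a) \<Rightarrow> (nat \<Rightarrow> 'a set) \<Rightarrow> nat \<Rightarrow> nat" where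
  "qdim scale V n = vector_space.dim scale (V n) - vector_space.dim scale (filt0 V (n - 1))"

definition h_alg ::
  "('k::field \<Rightarrow> 'a::ring_1 \<Rightarrow> 'a) \<Rightarrow> 'a set \<Rightarrow> (nat \<Rightarrow> 'a set) \<Rightarrow> ereal" where
  "h_alg scale A V = (if finite_dim scale A then 0 else
     limsup (\<lambda>n. if qdim scale V n = 0 then (-\<infinity>)
                 else ereal (ln (real (qdim scale V n)) / real n)))"

end

theory Submission imports Defs "HOL-Real_Asymp.Real_Asymp" begin
lemma filt_mono: "is_filtration scale A V \<Longrightarrow> i \<ge> 1 \<Longrightarrow> V i \<subseteq> V (Suc i)"
  unfolding is_filtration_def by blast

lemma filt_union: "is_filtration scale A V \<Longrightarrow> (\<Union>i\<in>{1..}. V i) = A"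
  unfolding is_filtration_def by blast

lemma filt_fin: "is_filtration scale A V \<Longrightarrow> i \<ge> 1 \<Longrightarrow>
   \<exists>B. finite B \<and> V i \<subseteq> module.span scale (filt0 V (i - 1) \<union> B)"
  unfolding is_filtration_def by blast

lemma fd_V:
  assumes vs: "vector_space scale" and F: "is_filtration scale UNIV V"
  shows "n \<ge> 1 \<Longrightarrow> \<exists>W. finite W \<and> V n \<subseteq> module.span scale W"
proof (induction n)
  case 0 then show ?case by simp
next
  case (Suc n)
  interpret vector_space scale by fact
  from filt_fin[OF F, of "Suc n"] obtain B where B: "finite B" "V (Suc n) \<subseteq> span (filt0 V n \<union> B)"
    by auto
  show ?case
  proof (cases "n = 0")
    case True
    then show ?thesis using B by (intro exI[of _ "{0} \<union> B"]) (auto simp: filt0_def)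
  next
    case False
    then obtain W where W: "finite W" "V n \<subseteq> span W" using Suc.IH by auto
    have "filt0 V n \<union> B \<subseteq> span (W \<union> B)"
      using False W(2) span_mono[of W "W \<union> B"] span_superset[of "W \<union> B"]
      by (auto simp: filt0_def)
    then have "span (filt0 V n \<union> B) \<subseteq> span (W \<union> B)"
      using span_mono span_span by blast
    then show ?thesis using B W by (intro exI[of _ "W \<union> B"]) auto
  qed
qed

lemma dim_img_le:
  assumes vs: "vector_space scale" and h: "module_hom scale scale f"
    and X: "X \<subseteq> module.span scale W" "finite W"
  shows "vector_space.dim scale (f ` X) \<le> vector_space.dim scale X"
proof -
  interpret vector_space scale by fact
  interpret module_hom scale scale f by fact
  obtain A where A: "A \<subseteq> X" "independent A" "X \<subseteq> span A" "card A = dim X"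
    using basis_exists by blast
  have fA: "finite A" using independent_span_bound[OF X(2) A(2)] A(1) X(1) by auto
  have "f ` X \<subseteq> f ` span A" using A(3) by auto
  also have "\<dots> = span (f ` A)" using span_image by simp
  finally have "dim (f ` X) \<le> card (f ` A)" using dim_le_card fA by blast
  also have "\<dots> \<le> card A" using card_image_le fA by blast
  finally show ?thesis using A(4) by simp
qed

lemma span_step:
  assumes vs: "vector_space scale" and XY: "X \<subseteq> Y" and Y: "Y \<subseteq> module.span scale W" "finite W"
    and d: "vector_space.dim scale Y \<le> vector_space.dim scale X"
  shows "Y \<subseteq> module.span scale X"
proof -
  interpret vector_space scale by fact
  obtain A where A: "A \<subseteq> X" "independent A" "X \<subseteq> span A" "card A = dim X"
    using basis_exists by blast
  obtain B where B: "A \<subseteq> B" "B \<subseteq> Y" "independent B" "Y \<subseteq> span B"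
    using maximal_independent_subset_extend[of A Y] A XY by blast
  have fB: "finite B" using independent_span_bound[OF Y(2) B(3)] B(2) Y(1) by auto
  have "card B = dim Y" using basis_card_eq_dim B by blast
  then have "card B \<le> card A" using d A(4) by simp
  moreover have "card A \<le> card B" using card_mono[OF fB B(1)] .
  ultimately have "card A = card B" by linarith
  then have "A = B" using card_subset_eq[OF fB B(1)] by blast
  then show ?thesis using B(4) A(1) span_mono by blast
qed

lemma growth:
  fixes D q :: "nat \<Rightarrow> nat" and a :: "nat \<Rightarrow> ereal" and c \<epsilon> :: real
  assumes a: "\<forall>n\<ge>1. a n = (if D n - D (n-1) = 0 then -\<infinity>
                  else ereal (ln (real (D n - D (n-1))) / real n))"
    and lim: "Limsup sequentially a < ereal c" and c: "c > 0"
    and q: "\<forall>n\<ge>1. q n \<le> D n" and e: "\<epsilon> > 0"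
  shows "eventually (\<lambda>n. (if q n = 0 then -\<infinity> else ereal (ln (real (q n)) / real n))
            \<le> ereal (c + \<epsilon>)) sequentially"
proof -
  from Limsup_lessD[OF lim] obtain N0 where N0: "\<And>n. n \<ge> N0 \<Longrightarrow> a n < ereal c"
    unfolding eventually_sequentially by blast
  define N where "N = max N0 1"
  have dbound: "real (D n - D (n-1)) \<le> exp (c * n)" if "n \<ge> N" for n
  proof (cases "D n - D (n-1) = 0")
    case True then show ?thesis by simp
  next
    case False
    have n1: "n \<ge> 1" "n \<ge> N0" using that by (auto simp: N_def)
    then have "ln (real (D n - D (n-1))) / real n < c" using N0[OF n1(2)] a False by auto
    then have "ln (real (D n - D (n-1))) < c * n" using n1 by (simp add: field_simps)
    then have "exp (ln (real (D n - D (n-1)))) < exp (c * n)" by simp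
    moreover have pos: "0 < real (D n - D (n-1))" using False by linarith
    ultimately show ?thesis by (metis exp_ln less_imp_le)
  qed
  define K where "K = real (D N)"
  have Dbound: "real (D n) \<le> K + n * exp (c * n)" if "n \<ge> N" for n
    using that
  proof (induction n rule: dec_induct)
    case base then show ?case by (simp add: K_def)
  next
    case (step n)
    have "real (D (Suc n)) \<le> real (D n) + real (D (Suc n) - D (Suc n - 1))" by simp
    also have "\<dots> \<le> K + n * exp (c * n) + exp (c * Suc n)"
      using step.IH dbound[of "Suc n"] step.hyps by simp
    also have "exp (c * n) \<le> exp (c * Suc n)" using c by simp
    then have "K + n * exp (c * n) + exp (c * Suc n) \<le> K + Suc n * exp (c * Suc n)"
      by (simp add: algebra_simps mult_left_mono)
    finally show ?case .
  qed
  have K0: "K \<ge> 0" by (simp add: K_def)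
  have "((\<lambda>n. (ln (K+1) + ln (real n)) / real n) \<longlongrightarrow> (0::real)) sequentially"
    by real_asymp
  then have "eventually (\<lambda>n. (ln (K+1) + ln (real n)) / real n < \<epsilon>) sequentially"
    using e by (simp add: order_tendsto_iff)
  then obtain N2 where N2: "\<And>n. n \<ge> N2 \<Longrightarrow> (ln (K+1) + ln (real n)) / real n < \<epsilon>"
    unfolding eventually_sequentially by blast
  show ?thesis unfolding eventually_sequentially
  proof (intro exI[of _ "max N N2"] allI impI)
    fix n assume n: "max N N2 \<le> n"
    then have nN: "n \<ge> N" "n \<ge> 1" "n \<ge> N2" by (auto simp: N_def)
    show "(if q n = 0 then -\<infinity> else ereal (ln (real (q n)) / real n)) \<le> ereal (c + \<epsilon>)"
    proof (cases "q n = 0")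
      case True then show ?thesis by simp
    next
      case False
      have "real (q n) \<le> real (D n)" using q nN by simp
      also have "\<dots> \<le> K + n * exp (c * n)" using Dbound nN by simp
      also have "\<dots> \<le> (K + 1) * (n * exp (c * n))"
      proof -
        have h1: "1 \<le> real n" using nN by simp
        have h2: "1 \<le> exp (c * n)" using c by simp
        have x1: "1 \<le> n * exp (c * n)" using mult_mono[OF h1 h2] by simp
        have "K \<le> K * (n * exp (c * n))" using mult_left_mono[OF x1 K0] by simp
        then show ?thesis by (simp add: algebra_simps)
      qed
      finally have qle: "real (q n) \<le> (K + 1) * (n * exp (c * n))" .
      have "ln (real (q n)) \<le> ln ((K + 1) * (n * exp (c * n)))"
        using qle False by simp
      also have "\<dots> = ln (K+1) + ln n + c * n" using K0 nN
        by (simp add: ln_mult)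
      finally have "ln (real (q n)) / n \<le> (ln (K+1) + ln n) / n + c"
        using nN by (simp add: field_simps)
      also have "\<dots> < \<epsilon> + c" using N2 nN by simp
      finally show ?thesis using False by simp
    qed
  qed
qed

lemma chain_V:
  assumes F: "is_filtration scale UNIV V" and "1 \<le> i" "i \<le> j"
  shows "V i \<subseteq> V j"
  using assms(3,2)
proof (induction j rule: dec_induct)
  case base then show ?case by simp
next
  case (step n)
  then show ?case using filt_mono[OF F, of n] by auto
qed

theorem proposition4p10:
  fixes scale :: "'k::field \<Rightarrow> 'a::ring_1 \<Rightarrow> 'a"
    and V :: "nat \<Rightarrow> 'a set"
    and e :: 'a
  assumes "is_algebra scale"
    and "fin_gen_algebra scale"
    and "is_filtration scale UNIV V"
    and "full_idempotent scale e"
  shows "h_alg scale {e * x * e | x. True} (\<lambda>i. {e * v * e | v. v \<in> V i})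
           \<le> h_alg scale UNIV V"
proof -
  note alg = assms(1) and F = assms(3)
  have vs: "vector_space scale" using alg unfolding is_algebra_def by blast
  interpret vector_space scale by fact
  define f where "f = (\<lambda>x. e * x * e)"
  have hom: "module_hom scale scale f"
    unfolding module_hom_iff
  proof (intro conjI allI)
    show "module scale" using vs by (simp add: vector_space_def module_def)
    then show "module scale" .
    fix x y show "f (x + y) = f x + f y" by (simp add: f_def algebra_simps)
  next
    fix c x
    have "scale c (e * x) = e * scale c x" using alg unfolding is_algebra_def by blast
    moreover have "scale c ((e * x) * e) = scale c (e * x) * e"
      using alg unfolding is_algebra_def by blast
    ultimately show "f (scale c x) = scale c (f x)" by (simp add: f_def)
  qed
  have G_eq: "(\<lambda>i. {e * v * e | v. v \<in> V i}) = (\<lambda>i. f ` V i)" by (auto simp: f_def)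
  have S_eq: "{e * x * e | x. True} = range f" by (auto simp: f_def)
  define aR where "aR = (\<lambda>n. if qdim scale V n = 0 then (-\<infinity>)
                 else ereal (ln (real (qdim scale V n)) / real n))"
  define b where "b = (\<lambda>n. if qdim scale (\<lambda>i. f ` V i) n = 0 then (-\<infinity>)
                 else ereal (ln (real (qdim scale (\<lambda>i. f ` V i) n)) / real n))"
  have Seq: "h_alg scale {e * x * e | x. True} (\<lambda>i. {e * v * e | v. v \<in> V i})
     = (if finite_dim scale (range f) then 0 else Limsup sequentially b)"
    unfolding G_eq S_eq h_alg_def b_def ..
  have Req: "h_alg scale UNIV V = (if finite_dim scale UNIV then 0 else Limsup sequentially aR)"
    unfolding h_alg_def aR_def ..
  have fdV: "\<exists>W. finite W \<and> V n \<subseteq> span W" if "n \<ge> 1" for n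
    using fd_V[OF vs F that] .
  show ?thesis
  proof (cases "finite_dim scale UNIV")
    case True
    then obtain B where B: "finite B" "UNIV \<subseteq> span B" unfolding finite_dim_def by blast
    have "range f \<subseteq> f ` span B" using B by auto
    also have "\<dots> = span (f ` B)" using module_hom.span_image[OF hom] by simp
    finally have "finite_dim scale (range f)" unfolding finite_dim_def using B by blast
    then show ?thesis unfolding Seq Req using True by simp
  next
    case nfd: False
    have hR: "h_alg scale UNIV V = Limsup sequentially aR" using nfd Req by simp
    have L0: "Limsup sequentially aR \<ge> 0"
    proof (rule ccontr)
      assume "\<not> Limsup sequentially aR \<ge> 0"
      then have "Limsup sequentially aR < 0" by simp
      from Limsup_lessD[OF this] obtain N0 where N0: "\<And>n. n \<ge> N0 \<Longrightarrow> aR n < 0"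
        unfolding eventually_sequentially by blast
      define N where "N = max N0 1"
      have q0: "qdim scale V n = 0" if "n \<ge> N" for n
      proof (rule ccontr)
        assume nz: "qdim scale V n \<noteq> 0"
        then have "ln (real (qdim scale V n)) \<ge> 0" by simp
        then have "ln (real (qdim scale V n)) / real n \<ge> 0" by simp
        then have "aR n \<ge> 0" using nz unfolding aR_def by simp
        then show False using N0[of n] that by (simp add: N_def)
      qed
      have N1: "N \<ge> 1" by (simp add: N_def)
      have VN: "V n \<subseteq> span (V N)" if "n \<ge> N" for n
        using that
      proof (induction n rule: dec_induct)
        case base then show ?case using span_superset by blast
      next
        case (step n)
        have n1: "n \<ge> 1" using step.hyps N1 by simp
        have "dim (V (Suc n)) \<le> dim (V n)"
          using q0[of "Suc n"] step.hyps n1 unfolding qdim_def filt0_def by simp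
        moreover have "V n \<subseteq> V (Suc n)" using filt_mono[OF F n1] .
        moreover obtain W where "finite W" "V (Suc n) \<subseteq> span W" using fdV[of "Suc n"] by auto
        ultimately have "V (Suc n) \<subseteq> span (V n)" using span_step[OF vs] by blast
        also have "\<dots> \<subseteq> span (V N)" using step.IH span_mono span_span by blast
        finally show ?case .
      qed
      have "UNIV \<subseteq> span (V N)"
      proof
        fix x :: 'a
        have "x \<in> (\<Union>i\<in>{1..}. V i)" using filt_union[OF F] by blast
        then obtain i where i: "i \<ge> 1" "x \<in> V i" by auto
        show "x \<in> span (V N)"
        proof (cases "i \<le> N")
          case True then show ?thesis using chain_V[OF F i(1) True] i span_superset by blast
        next
          case False then show ?thesis using VN[of i] i by auto
        qed
      qed
      moreover obtain W where "finite W" "V N \<subseteq> span W" using fdV[OF N1] by auto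
      moreover have "span (V N) \<subseteq> span W" using \<open>V N \<subseteq> span W\<close> span_mono span_span by blast
      ultimately have "UNIV \<subseteq> span W" by blast
      then have "finite_dim scale UNIV" unfolding finite_dim_def using \<open>finite W\<close> by blast
      then show False using nfd by simp
    qed
    show ?thesis
    proof (cases "finite_dim scale (range f)")
      case True then show ?thesis unfolding Seq hR using L0 by simp
    next
      case False
      have hS: "h_alg scale {e * x * e | x. True} (\<lambda>i. {e * v * e | v. v \<in> V i})
          = Limsup sequentially b" using Seq False by simp
      show ?thesis unfolding hS hR
      proof (cases "Limsup sequentially aR")
        case (real l)
        have l0: "l \<ge> 0" using L0 real by simp
        show "Limsup sequentially b \<le> Limsup sequentially aR"
          unfolding real
        proof (rule ereal_le_epsilon2)
          fix \<epsilon> :: real assume e: "0 < \<epsilon>"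
          define D where "D = (\<lambda>n. dim (filt0 V n))"
          have a: "\<forall>n\<ge>1. aR n = (if D n - D (n-1) = 0 then -\<infinity>
                  else ereal (ln (real (D n - D (n-1))) / real n))"
            unfolding aR_def qdim_def D_def filt0_def by auto
          have lim: "Limsup sequentially aR < ereal (l + \<epsilon>/2)" using real e by simp
          have q: "\<forall>n\<ge>1. qdim scale (\<lambda>i. f ` V i) n \<le> D n"
          proof (intro allI impI)
            fix n :: nat assume n: "n \<ge> 1"
            obtain W where "finite W" "V n \<subseteq> span W" using fdV[OF n] by auto
            then have "dim (f ` V n) \<le> dim (V n)" using dim_img_le[OF vs hom] by blast
            then show "qdim scale (\<lambda>i. f ` V i) n \<le> D n"
              unfolding qdim_def D_def filt0_def using n by simp
          qed
          have "eventually (\<lambda>n. b n \<le> ereal (l + \<epsilon>/2 + \<epsilon>/2)) sequentially"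
            using growth[OF a lim _ q, of "\<epsilon>/2"] l0 e unfolding b_def by simp
          then have "Limsup sequentially b \<le> ereal (l + \<epsilon>/2 + \<epsilon>/2)"
            by (rule Limsup_bounded)
          then show "Limsup sequentially b \<le> ereal l + ereal \<epsilon>" by (simp add: add.commute)
        qed
      next
        case PInf then show "Limsup sequentially b \<le> Limsup sequentially aR" by simp
      next
        case MInf then show "Limsup sequentially b \<le> Limsup sequentially aR" using L0 by simp
      qed
    qed
  qed
qed

end
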